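(* A countably based topological space is scattered if and only if it is a countable quasi-Polish space satisfying the $T_D$-axiom.
   Context: A point $x$ is isolated if $\{x\}$ is open, otherwise a limit point. Derived sets: $X^{(0)}=X$, $X^{(\alpha+1)}$ is the set of points of $X^{(\alpha)}$ that are limit points of the subspace $X^{(\alpha)}$, and $X^{(\alpha)}=\bigcap_{\beta<\alpha}X^{(\beta)}$ for limit $\alpha$; $|X|_{CB}$ is the least $\alpha$ with $X^{(\alpha)}=X^{(\alpha+1)}$. $X$ is scattered if $X^{(|X|_{CB})}=\emptyset$ (equivalently every non-empty subspace has an isolated point). A set is locally closed if it is the intersection of an open and a closed set; $X$ satisfies $T_D$ if every singleton $\{x\}$ is locally closed. A quasi-metric on a set $X$ is a function $d\colon X\times X\to[0,\infty)$ with $x=y$ iff $d(x,y)=d(y,x)=0$ and $d(x,z)\le d(x,y)+d(y,z)$; it induces the topology generated by $B_d(x,\varepsilon)=\{y\mid d(x,y)<\varepsilon\}$; $\widehat d(x,y)=\max\{d(x,y),d(y,x)\}$. $(x_n)$ is Cauchy if for every $\varepsilon>0$ there is $n_0$ with $d(x_n,x_m)<\varepsilon$ for all $m\ge n\ge n_0$; $d$ is complete if every Cauchy sequence converges in the topology of $\widehat d$. A space is quasi-Polish if it is countably based and its topology is induced by a complete quasi-metric. *)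

theory Defs
  imports "HOL-Analysis.Analysis"
begin

definition isolated_point_of :: "'a topology \<Rightarrow> 'a \<Rightarrow> bool" where
  "isolated_point_of X x \<longleftrightarrow> x \<in> topspace X \<and> openin X {x}"

definition scattered_space :: "'a topology \<Rightarrow> bool" where
  "scattered_space X \<longleftrightarrow>
     (\<forall>S. S \<subseteq> topspace X \<and> S \<noteq> {} \<longrightarrow> (\<exists>x\<in>S. isolated_point_of (subtopology X S) x))"

definition locally_closed_in :: "'a topology \<Rightarrow> 'a set \<Rightarrow> bool" where
  "locally_closed_in X A \<longleftrightarrow> (\<exists>U C. openin X U \<and> closedin X C \<and> A = U \<inter> C)"

definition T_D_space :: "'a topology \<Rightarrow> bool" where
  "T_D_space X \<longleftrightarrow> (\<forall>x\<in>topspace X. locally_closed_in X {x})"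

definition quasi_metric_on :: "'a set \<Rightarrow> ('a \<Rightarrow> 'a \<Rightarrow> real) \<Rightarrow> bool" where
  "quasi_metric_on S d \<longleftrightarrow>
     (\<forall>x\<in>S. \<forall>y\<in>S. 0 \<le> d x y) \<and>
     (\<forall>x\<in>S. \<forall>y\<in>S. x = y \<longleftrightarrow> d x y = 0 \<and> d y x = 0) \<and>
     (\<forall>x\<in>S. \<forall>y\<in>S. \<forall>z\<in>S. d x z \<le> d x y + d y z)"

definition qball :: "'a set \<Rightarrow> ('a \<Rightarrow> 'a \<Rightarrow> real) \<Rightarrow> 'a \<Rightarrow> real \<Rightarrow> 'a set" where
  "qball S d x e = {y \<in> S. d x y < e}"

definition qm_topology :: "'a set \<Rightarrow> ('a \<Rightarrow> 'a \<Rightarrow> real) \<Rightarrow> 'a topology" where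
  "qm_topology S d = topology_generated_by {qball S d x e | x e. x \<in> S \<and> 0 < e}"

definition sym_qm :: "('a \<Rightarrow> 'a \<Rightarrow> real) \<Rightarrow> 'a \<Rightarrow> 'a \<Rightarrow> real" where
  "sym_qm d x y = max (d x y) (d y x)"

definition qm_Cauchy :: "'a set \<Rightarrow> ('a \<Rightarrow> 'a \<Rightarrow> real) \<Rightarrow> (nat \<Rightarrow> 'a) \<Rightarrow> bool" where
  "qm_Cauchy S d \<sigma> \<longleftrightarrow> range \<sigma> \<subseteq> S \<and>
     (\<forall>\<epsilon>>0. \<exists>n0. \<forall>n m. n0 \<le> n \<and> n \<le> m \<longrightarrow> d (\<sigma> n) (\<sigma> m) < \<epsilon>)"

definition qm_complete :: "'a set \<Rightarrow> ('a \<Rightarrow> 'a \<Rightarrow> real) \<Rightarrow> bool" where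
  "qm_complete S d \<longleftrightarrow>
     (\<forall>\<sigma>. qm_Cauchy S d \<sigma> \<longrightarrow>
        (\<exists>y. limitin (qm_topology S (sym_qm d)) \<sigma> y sequentially))"

definition quasi_Polish :: "'a topology \<Rightarrow> bool" where
  "quasi_Polish X \<longleftrightarrow> second_countable X \<and>
     (\<exists>d. quasi_metric_on (topspace X) d \<and> qm_topology (topspace X) d = X \<and>
          qm_complete (topspace X) d)"

end

theory Submission
  imports Defs
begin


lemma qm_refl: "quasi_metric_on S d \<Longrightarrow> x \<in> S \<Longrightarrow> d x x = 0"
  unfolding quasi_metric_on_def by blast

lemma qball_subset: "qball S d x e \<subseteq> S" by (auto simp: qball_def)

lemma qm_open_iff:
  assumes qm: "quasi_metric_on S d"
  shows "openin (qm_topology S d) U \<longleftrightarrow> U \<subseteq> S \<and> (\<forall>x\<in>U. \<exists>e>0. qball S d x e \<subseteq> U)"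
proof
  assume "openin (qm_topology S d) U"
  then have "generate_topology_on {qball S d x e | x e. x \<in> S \<and> 0 < e} U"
    unfolding qm_topology_def by (rule openin_topology_generated_by)
  then show "U \<subseteq> S \<and> (\<forall>x\<in>U. \<exists>e>0. qball S d x e \<subseteq> U)"
  proof (induction rule: generate_topology_on.induct)
    case Empty
    then show ?case by auto
  next
    case (Int a b)
    show ?case
    proof (intro conjI ballI)
      show "a \<inter> b \<subseteq> S" using Int by auto
      fix x assume "x \<in> a \<inter> b"
      then obtain e1 e2 where "e1 > 0" "qball S d x e1 \<subseteq> a" "e2 > 0" "qball S d x e2 \<subseteq> b"
        using Int by blast
      then show "\<exists>e>0. qball S d x e \<subseteq> a \<inter> b"
        by (intro exI[of _ "min e1 e2"]) (auto simp: qball_def)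
    qed
  next
    case (UN K)
    show ?case
    proof (intro conjI ballI)
      show "\<Union>K \<subseteq> S" using UN by blast
      fix x assume "x \<in> \<Union>K"
      then obtain k where "k \<in> K" "x \<in> k" by blast
      then obtain e where "e > 0" "qball S d x e \<subseteq> k" using UN by blast
      then show "\<exists>e>0. qball S d x e \<subseteq> \<Union>K" using \<open>k \<in> K\<close> by blast
    qed
  next
    case (Basis s)
    then obtain z e where s: "s = qball S d z e" "z \<in> S" "0 < e" by blast
    show ?case
    proof (intro conjI ballI)
      show "s \<subseteq> S" using s by (auto simp: qball_def)
      fix x assume x: "x \<in> s"
      then have xS: "x \<in> S" and dz: "d z x < e" using s by (auto simp: qball_def)
      show "\<exists>e'>0. qball S d x e' \<subseteq> s"
      proof (intro exI conjI)
        show "0 < e - d z x" using dz by simp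
        show "qball S d x (e - d z x) \<subseteq> s"
        proof
          fix y assume "y \<in> qball S d x (e - d z x)"
          then have "y \<in> S" "d x y < e - d z x" by (auto simp: qball_def)
          moreover have "d z y \<le> d z x + d x y" using qm xS \<open>y \<in> S\<close> s(2)
            unfolding quasi_metric_on_def by blast
          ultimately show "y \<in> s" using s by (auto simp: qball_def)
        qed
      qed
    qed
  qed
next
  assume H: "U \<subseteq> S \<and> (\<forall>x\<in>U. \<exists>e>0. qball S d x e \<subseteq> U)"
  then obtain E where E: "\<And>x. x \<in> U \<Longrightarrow> E x > 0 \<and> qball S d x (E x) \<subseteq> U" by metis
  have self: "x \<in> qball S d x e" if "x \<in> S" "e > 0" for x e
    using qm_refl[OF qm] that unfolding qball_def by auto
  have "U = \<Union>((\<lambda>x. qball S d x (E x)) ` U)"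
    using E H self by blast
  moreover have "openin (qm_topology S d) (\<Union>((\<lambda>x. qball S d x (E x)) ` U))"
    unfolding qm_topology_def
    by (rule openin_Union) (use E H in \<open>auto intro!: topology_generated_by_Basis, metis subsetD\<close>)
  ultimately show "openin (qm_topology S d) U" by simp
qed

lemma qm_topspace:
  assumes qm: "quasi_metric_on S d"
  shows "topspace (qm_topology S d) = S"
proof -
  have "x \<in> qball S d x 1" if "x \<in> S" for x
    using qm_refl[OF qm] that unfolding qball_def by auto
  then show ?thesis unfolding qm_topology_def topology_generated_by_topspace
    apply (auto simp: qball_def)
    subgoal for x by (rule exI[of _ "qball S d x 1"]) (auto simp: qball_def intro!: exI[of _ x] exI[of _ "1::real"])
    done
qed

lemma qball_open:
  assumes "x \<in> S" "e > 0"
  shows "openin (qm_topology S d) (qball S d x e)"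
  unfolding qm_topology_def using assms by (intro topology_generated_by_Basis) auto



lemma baire_step:
  assumes qm: "quasi_metric_on S d"
    and TD: "T_D_space (qm_topology S d)"
    and FS: "F \<subseteq> S"
    and noiso: "\<forall>x\<in>F. \<forall>U. openin (qm_topology S d) U \<longrightarrow> U \<inter> F \<noteq> {x}"
    and x: "x \<in> F" and e: "e > 0" and p: "p \<in> F"
  shows "\<exists>x' e'. x' \<in> F \<and> 0 < e' \<and> e' \<le> e/2 \<and> qball S d x' e' \<subseteq> qball S d x (e/2)
            \<and> p \<notin> qball S d x' e'"
proof (cases "p \<in> qball S d x (e/2)")
  case False
  then show ?thesis using x e by (intro exI[of _ x] exI[of _ "e/2"]) auto
next
  case True
  let ?Y = "qm_topology S d"
  have tY: "topspace ?Y = S" using qm_topspace[OF qm] .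
  obtain U C where UC: "openin ?Y U" "closedin ?Y C" "{p} = U \<inter> C"
    using TD p FS tY unfolding T_D_space_def locally_closed_in_def by (metis subsetD)
  define Oa where "Oa = U \<inter> qball S d x (e/2)"
  have oOa: "openin ?Y Oa" unfolding Oa_def
    using UC(1) qball_open[of x S "e/2" d] x FS e by auto
  have pO: "p \<in> Oa" using UC True unfolding Oa_def by auto
  then have "Oa \<inter> F \<noteq> {p}" using noiso p oOa by simp
  then obtain z where z: "z \<in> Oa" "z \<in> F" "z \<noteq> p" using pO p by auto
  have zC: "z \<notin> C" using z UC(3) unfolding Oa_def by auto
  define Ob where "Ob = Oa \<inter> (S - C)"
  have oOb: "openin ?Y Ob" unfolding Ob_def
    using oOa UC(2) tY by (simp add: closedin_def openin_Int)
  have zOb: "z \<in> Ob" using z zC FS unfolding Ob_def by auto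
  obtain r where r: "r > 0" "qball S d z r \<subseteq> Ob"
    using oOb zOb qm_open_iff[OF qm, of Ob] by auto
  have pC: "p \<in> C" using UC(3) by auto
  show ?thesis
  proof (intro exI conjI)
    show "z \<in> F" by fact
    show "0 < min r (e/2)" using r e by simp
    show "min r (e/2) \<le> e/2" by simp
    have "qball S d z (min r (e/2)) \<subseteq> qball S d z r" by (auto simp: qball_def)
    also have "\<dots> \<subseteq> Ob" by fact
    finally have sub: "qball S d z (min r (e/2)) \<subseteq> Ob" .
    then show "qball S d z (min r (e / 2)) \<subseteq> qball S d x (e / 2)"
      unfolding Ob_def Oa_def by auto
    show "p \<notin> qball S d z (min r (e / 2))" using sub pC unfolding Ob_def by auto
  qed
qed



lemma baire_iso:
  assumes qm: "quasi_metric_on S d"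
    and TD: "T_D_space (qm_topology S d)"
    and compl: "qm_complete S d"
    and cS: "countable S"
    and Fc: "closedin (qm_topology S d) F" and Fne: "F \<noteq> {}"
  shows "\<exists>x\<in>F. \<exists>U. openin (qm_topology S d) U \<and> U \<inter> F = {x}"
proof (rule ccontr)
  let ?Y = "qm_topology S d"
  assume "\<not> ?thesis"
  then have noiso: "\<forall>x\<in>F. \<forall>U. openin ?Y U \<longrightarrow> U \<inter> F \<noteq> {x}" by blast
  have tY: "topspace ?Y = S" using qm_topspace[OF qm] .
  have FS: "F \<subseteq> S" using closedin_subset[OF Fc] tY by simp
  have cF: "countable F" using cS FS countable_subset by blast
  define f where "f = from_nat_into F"
  have rf: "range f = F" unfolding f_def using Fne cF by simp
  obtain x0 where x0: "x0 \<in> F" using Fne by blast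
  define R where "R = (\<lambda>n (p::'a \<times> real) (q::'a \<times> real). fst q \<in> F \<and> 0 < snd q \<and> snd q \<le> snd p/2
     \<and> qball S d (fst q) (snd q) \<subseteq> qball S d (fst p) (snd p/2) \<and> f n \<notin> qball S d (fst q) (snd q))"
  define seq where "seq = rec_nat (x0, 1::real) (\<lambda>n p. SOME q. R n p q)"
  have seq0: "seq 0 = (x0, 1)" unfolding seq_def by simp
  have seqS: "seq (Suc n) = (SOME q. R n (seq n) q)" for n unfolding seq_def by simp
  have ex: "\<exists>q. R n p q" if "fst p \<in> F" "snd p > 0" for n p
    using baire_step[OF qm TD FS noiso that(1) that(2), of "f n"] rf unfolding R_def by auto
  have inv: "fst (seq n) \<in> F \<and> snd (seq n) > 0 \<and> R n (seq n) (seq (Suc n))" for n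
  proof (induction n)
    case 0
    then show ?case using ex[of "seq 0" 0] someI_ex[OF ex[of "seq 0" 0]] seq0 x0
      by (simp add: seqS)
  next
    case (Suc n)
    then have "fst (seq (Suc n)) \<in> F \<and> snd (seq (Suc n)) > 0" unfolding R_def by auto
    then show ?case using someI_ex[OF ex[of "seq (Suc n)" "Suc n"]] by (simp add: seqS)
  qed
  define x where "x n = fst (seq n)" for n
  define r where "r n = snd (seq n)" for n
  have xF: "x n \<in> F" and rpos: "r n > 0" for n using inv[of n] unfolding x_def r_def by auto
  have xS: "x n \<in> S" for n using xF FS by auto
  have rdec: "r (Suc n) \<le> r n / 2" for n using inv[of n] unfolding R_def x_def r_def by auto
  have bsub: "qball S d (x (Suc n)) (r (Suc n)) \<subseteq> qball S d (x n) (r n / 2)" for n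
    using inv[of n] unfolding R_def x_def r_def by auto
  have avoid: "f n \<notin> qball S d (x (Suc n)) (r (Suc n))" for n
    using inv[of n] unfolding R_def x_def r_def by auto
  have rle: "r n \<le> (1/2)^n" for n
  proof (induction n)
    case 0 then show ?case using seq0 unfolding r_def by simp
  next
    case (Suc n) then show ?case using rdec[of n] by simp
  qed
  have half_sub: "qball S d x' (e/2) \<subseteq> qball S d x' e" if "e > 0" for x' e
    using that by (auto simp: qball_def)
  have nest: "qball S d (x m) (r m) \<subseteq> qball S d (x (Suc n)) (r (Suc n))" if "Suc n \<le> m" for m n
    using that
  proof (induction m rule: dec_induct)
    case base then show ?case by simp
  next
    case (step k)
    have "qball S d (x (Suc k)) (r (Suc k)) \<subseteq> qball S d (x k) (r k / 2)" by (rule bsub)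
    also have "\<dots> \<subseteq> qball S d (x k) (r k)" using half_sub rpos by blast
    finally show ?case using step.IH by blast
  qed
  have selfb: "x m \<in> qball S d (x m) (r m)" for m
    using qm_refl[OF qm xS[of m]] xS[of m] rpos[of m] by (simp add: qball_def)
  have close: "d (x n) (x m) < r n / 2" if "n < m" for n m
  proof -
    have "x m \<in> qball S d (x (Suc n)) (r (Suc n))" using nest[of n m] that selfb by auto
    then have "x m \<in> qball S d (x n) (r n / 2)" using bsub by blast
    then show ?thesis by (simp add: qball_def)
  qed
  have close2: "d (x n) (x m) < r n" if "n \<le> m" for n m
  proof (cases "n = m")
    case True then show ?thesis using qm_refl[OF qm xS[of n]] rpos by simp
  next
    case False then show ?thesis using close[of n m] that rpos[of n] by simp
  qed
  have cauchy: "qm_Cauchy S d x"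
    unfolding qm_Cauchy_def
  proof (intro conjI allI impI)
    show "range x \<subseteq> S" using xS by auto
    fix \<epsilon> :: real assume "\<epsilon> > 0"
    then obtain n0 where n0: "(1/2::real)^n0 < \<epsilon>" using real_arch_pow_inv[of \<epsilon> "1/2"] by auto
    show "\<exists>n0. \<forall>n m. n0 \<le> n \<and> n \<le> m \<longrightarrow> d (x n) (x m) < \<epsilon>"
    proof (intro exI allI impI)
      fix n m assume nm: "n0 \<le> n \<and> n \<le> m"
      have "d (x n) (x m) < r n" using close2 nm by blast
      also have "\<dots> \<le> (1/2)^n" by (rule rle)
      also have "\<dots> \<le> (1/2)^n0" using nm by (simp add: power_decreasing)
      finally show "d (x n) (x m) < \<epsilon>" using n0 by simp
    qed
  qed
  then obtain y where lim: "limitin (qm_topology S (sym_qm d)) x y sequentially"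
    using compl unfolding qm_complete_def by blast
  have yS: "y \<in> S"
  proof -
    have "y \<in> topspace (qm_topology S (sym_qm d))" using lim by (simp add: limitin_def)
    then show ?thesis unfolding qm_topology_def topology_generated_by_topspace
      by (auto simp: qball_def)
  qed
  have ev: "eventually (\<lambda>m. d (x m) y < \<delta> \<and> d y (x m) < \<delta>) sequentially" if "\<delta> > 0" for \<delta>
  proof -
    have "openin (qm_topology S (sym_qm d)) (qball S (sym_qm d) y \<delta>)"
      by (rule qball_open) (use yS that in auto)
    moreover have "y \<in> qball S (sym_qm d) y \<delta>"
      using qm_refl[OF qm yS] yS that by (simp add: qball_def sym_qm_def)
    ultimately have "eventually (\<lambda>m. x m \<in> qball S (sym_qm d) y \<delta>) sequentially"
      using lim by (simp add: limitin_def)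
    then show ?thesis by eventually_elim (auto simp: qball_def sym_qm_def)
  qed
  have yball: "y \<in> qball S d (x n) (r n)" for n
  proof -
    have "r n / 2 > 0" using rpos by simp
    from ev[OF this] obtain M where M: "\<And>m. m \<ge> M \<Longrightarrow> d (x m) y < r n / 2"
      unfolding eventually_sequentially by blast
    let ?m = "max M (Suc n)"
    have "d (x n) y \<le> d (x n) (x ?m) + d (x ?m) y"
      using qm xS yS unfolding quasi_metric_on_def by blast
    also have "\<dots> < r n / 2 + r n / 2"
    proof -
      have h1: "d (x n) (x ?m) < r n / 2" by (rule close) simp
      have h2: "d (x ?m) y < r n / 2" by (rule M) simp
      from h1 h2 show ?thesis by linarith
    qed
    finally show ?thesis using yS by (simp add: qball_def)
  qed
  have yF: "y \<in> F"
  proof (rule ccontr)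
    assume "y \<notin> F"
    have "openin ?Y (S - F)" using Fc tY by (simp add: closedin_def)
    then obtain e where e: "e > 0" "qball S d y e \<subseteq> S - F"
      using qm_open_iff[OF qm, of "S - F"] yS \<open>y \<notin> F\<close> by auto
    from ev[OF e(1)] obtain M where "\<And>m. m \<ge> M \<Longrightarrow> d y (x m) < e"
      unfolding eventually_sequentially by blast
    then have "x M \<in> qball S d y e" using xS by (simp add: qball_def)
    then show False using e xF by blast
  qed
  then obtain k where "y = f k" using rf by blast
  then show False using avoid[of k] yball[of "Suc k"] by simp
qed



lemma backward:
  assumes cX: "countable (topspace X)" and qP: "quasi_Polish X" and TD: "T_D_space X"
  shows "scattered_space X"
proof -
  let ?S = "topspace X"
  obtain d where qm: "quasi_metric_on ?S d" and eq: "qm_topology ?S d = X" and compl: "qm_complete ?S d"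
    using qP unfolding quasi_Polish_def by blast
  have key: "\<exists>x\<in>F. \<exists>U. openin X U \<and> U \<inter> F = {x}" if "closedin X F" "F \<noteq> {}" for F
    using baire_iso[OF qm _ compl cX, of F] TD that eq by simp
  show ?thesis unfolding scattered_space_def
  proof (intro allI impI)
    fix S' assume S': "S' \<subseteq> ?S \<and> S' \<noteq> {}"
    let ?F = "X closure_of S'"
    have "S' \<subseteq> ?F" using S' closure_of_subset by blast
    then have "?F \<noteq> {}" using S' by blast
    then obtain x U where xF: "x \<in> ?F" and U: "openin X U" "U \<inter> ?F = {x}"
      using key[of ?F] closedin_closure_of by blast
    have "x \<in> U" using U by blast
    then obtain y where y: "y \<in> S'" "y \<in> U" using xF U(1) unfolding in_closure_of by blast
    then have "y = x" using U(2) \<open>S' \<subseteq> ?F\<close> by blast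
    then have xS': "x \<in> S'" using y by simp
    have "U \<inter> S' = {x}" using U(2) \<open>S' \<subseteq> ?F\<close> xS' \<open>x \<in> U\<close> by blast
    then have "openin (subtopology X S') {x}" using U(1) openin_subtopology by blast
    moreover have "x \<in> topspace (subtopology X S')" using xS' S' by auto
    ultimately show "\<exists>x\<in>S'. isolated_point_of (subtopology X S') x"
      using xS' unfolding isolated_point_of_def by blast
  qed
qed



lemma scat_iso_open:
  assumes "scattered_space X" "T \<subseteq> topspace X" "T \<noteq> {}"
  obtains x V where "x \<in> T" "openin X V" "V \<inter> T = {x}"
proof -
  obtain x where "x \<in> T" "openin (subtopology X T) {x}"
    using assms unfolding scattered_space_def isolated_point_of_def by meson
  then obtain V where "openin X V" "{x} = V \<inter> T" unfolding openin_subtopology by blast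
  then show ?thesis using that \<open>x \<in> T\<close> by blast
qed

lemma scat_TD:
  assumes sc: "scattered_space X"
  shows "T_D_space X"
  unfolding T_D_space_def locally_closed_in_def
proof
  fix x assume x: "x \<in> topspace X"
  let ?C = "X closure_of {x}"
  have xC: "x \<in> ?C" using x closure_of_subset[of "{x}" X] by auto
  obtain z V where z: "z \<in> ?C" "openin X V" "V \<inter> ?C = {z}"
    using scat_iso_open[OF sc, of ?C] closure_of_subset_topspace xC by (metis empty_iff)
  have "z \<in> V" using z by blast
  then have "x \<in> V" using z(1,2) unfolding in_closure_of by blast
  then have "{x} = V \<inter> ?C" using z xC by auto
  then show "\<exists>U C. openin X U \<and> closedin X C \<and> {x} = U \<inter> C"
    using z(2) closedin_closure_of by blast
qed

lemma scat_countable: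
  assumes sc: "scattered_space X" and sec: "second_countable X"
  shows "countable (topspace X)"
proof -
  obtain B where B: "countable B" "\<forall>V\<in>B. openin X V"
    "\<forall>U x. openin X U \<and> x \<in> U \<longrightarrow> (\<exists>V\<in>B. x \<in> V \<and> V \<subseteq> U)"
    using sec unfolding second_countable_def by auto
  define U where "U = \<Union>{b\<in>B. countable b}"
  have cU: "countable U" unfolding U_def 
  proof -
    have "countable {b\<in>B. countable b}" using B(1) by (rule countable_subset[rotated]) auto
    then have "countable (\<Union>b\<in>{b\<in>B. countable b}. b)"
      by (rule countable_UN) simp
    then show "countable (\<Union>{b\<in>B. countable b})" by simp
  qed
  have "topspace X - U = {}"
  proof (rule ccontr)
    assume ne: "topspace X - U \<noteq> {}"
    have sub: "topspace X - U \<subseteq> topspace X" by blast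
    obtain x V where xV: "x \<in> topspace X - U" "openin X V" "V \<inter> (topspace X - U) = {x}"
      by (rule scat_iso_open[OF sc sub ne])
    have "x \<in> V" using xV(3) by auto
    then obtain b where b: "b \<in> B" "x \<in> b" "b \<subseteq> V" using B(3) xV(2) by meson
    have "b \<subseteq> insert x U"
    proof
      fix z assume "z \<in> b"
      then have "z \<in> topspace X" using B(2) b(1) openin_subset by (metis subsetD)
      then show "z \<in> insert x U" using xV(3) b(3) \<open>z \<in> b\<close> by (cases "z \<in> U") auto
    qed
    then have "countable b" using cU by (meson countable_insert countable_subset)
    then have "x \<in> U" unfolding U_def using b by auto
    then show False using xV(1) by simp
  qed
  then have "topspace X \<subseteq> U" by simp
  then show ?thesis using cU by (rule countable_subset)
qed



definition relW :: "('a \<times> 'a set) set \<Rightarrow> ('a \<times> 'a) set" where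
  "relW R = {(y,x). \<exists>V. (x,V) \<in> R \<and> y \<in> V \<and> y \<noteq> x}"

definition okW :: "'a topology \<Rightarrow> ('a \<times> 'a set) set \<Rightarrow> bool" where
  "okW X R \<longleftrightarrow> (\<forall>x V V'. (x,V) \<in> R \<longrightarrow> (x,V') \<in> R \<longrightarrow> V' = V) \<and>
     (\<forall>x V. (x,V) \<in> R \<longrightarrow> x \<in> topspace X \<and> openin X V \<and> x \<in> V \<and> V \<subseteq> Domain R \<and>
        (\<forall>y V'. y \<in> V \<longrightarrow> (y,V') \<in> R \<longrightarrow> V' \<subseteq> V)) \<and>
     wf (relW R)"

lemma okW_chain:
  assumes C: "C \<in> chains {R. okW X R}"
  shows "okW X (\<Union>C)"
proof -
  have ok: "okW X R" if "R \<in> C" for R using C that unfolding chains_def by blast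
  have ch: "R1 \<subseteq> R2 \<or> R2 \<subseteq> R1" if "R1 \<in> C" "R2 \<in> C" for R1 R2
    using C that unfolding chains_def chain_subset_def by blast
  have sv: "V' = V" if h: "(x,V) \<in> \<Union>C" "(x,V') \<in> \<Union>C" for x V V'
  proof -
    obtain R1 R2 where R: "R1 \<in> C" "(x,V) \<in> R1" "R2 \<in> C" "(x,V') \<in> R2" using h by blast
    show ?thesis
    proof (cases "R1 \<subseteq> R2")
      case True
      then show ?thesis using ok[OF R(3)] R unfolding okW_def by blast
    next
      case False
      then have "R2 \<subseteq> R1" using ch R by blast
      then show ?thesis using ok[OF R(1)] R unfolding okW_def by blast
    qed
  qed
  have loc: "x \<in> topspace X \<and> openin X V \<and> x \<in> V \<and> V \<subseteq> Domain (\<Union>C) \<and>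
        (\<forall>y V'. y \<in> V \<longrightarrow> (y,V') \<in> \<Union>C \<longrightarrow> V' \<subseteq> V)" if xV: "(x,V) \<in> \<Union>C" for x V
  proof -
    obtain R1 where R1: "R1 \<in> C" "(x,V) \<in> R1" using xV by blast
    have P: "x \<in> topspace X \<and> openin X V \<and> x \<in> V \<and> V \<subseteq> Domain R1 \<and>
        (\<forall>y V'. y \<in> V \<longrightarrow> (y,V') \<in> R1 \<longrightarrow> V' \<subseteq> V)"
      using ok[OF R1(1)] R1(2) unfolding okW_def by blast
    have "Domain R1 \<subseteq> Domain (\<Union>C)" using R1(1) by blast
    moreover have "V' \<subseteq> V" if h: "y \<in> V" "(y,V') \<in> \<Union>C" for y V'
    proof -
      obtain V'' where "(y,V'') \<in> R1" using P h(1) by blast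
      moreover have "V' = V''" using sv[OF _ h(2)] R1(1) calculation by blast
      ultimately show ?thesis using P h(1) by blast
    qed
    ultimately show ?thesis using P by blast
  qed
  have "wf (relW (\<Union>C))"
  proof (rule wfI_min)
    fix x Q assume xQ: "(x::'a) \<in> Q"
    show "\<exists>z\<in>Q. \<forall>y. (y, z) \<in> relW (\<Union>C) \<longrightarrow> y \<notin> Q"
    proof (cases "x \<in> Domain (\<Union>C)")
      case False
      then show ?thesis using xQ unfolding relW_def by blast
    next
      case True
      then obtain R1 V where R1: "R1 \<in> C" "(x,V) \<in> R1" by blast
      have P: "x \<in> V \<and> V \<subseteq> Domain R1 \<and> (\<forall>y V'. y \<in> V \<longrightarrow> (y,V') \<in> R1 \<longrightarrow> V' \<subseteq> V)"
        using ok[OF R1(1)] R1(2) unfolding okW_def by blast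
      have wf1: "wf (relW R1)" using ok[OF R1(1)] unfolding okW_def by blast
      have "x \<in> Q \<inter> V" using xQ P by blast
      then obtain z where z: "z \<in> Q \<inter> V" "\<And>y. (y, z) \<in> relW R1 \<Longrightarrow> y \<notin> Q \<inter> V"
        using wfE_min[OF wf1] by metis
      have "y \<notin> Q" if yz: "(y, z) \<in> relW (\<Union>C)" for y
      proof -
        obtain V2 where V2: "(z,V2) \<in> \<Union>C" "y \<in> V2" "y \<noteq> z" using yz unfolding relW_def by blast
        obtain V1 where V1: "(z,V1) \<in> R1" using z(1) P by blast
        have "V1 \<subseteq> V" using P V1 z(1) by blast
        moreover have "V2 = V1" using sv[OF _ V2(1)] V1 R1(1) by blast
        ultimately have "y \<in> V" "(y,z) \<in> relW R1" using V1 V2 unfolding relW_def by blast+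
        then show ?thesis using z(2) by blast
      qed
      then show ?thesis using z(1) by blast
    qed
  qed
  then show ?thesis unfolding okW_def using sv loc by blast
qed



lemma okW_extend:
  assumes ok: "okW X R" and sc: "scattered_space X" and ne: "Domain R \<noteq> topspace X"
  shows "\<exists>R'. okW X R' \<and> R \<subset> R'"
proof -
  let ?A = "Domain R"
  have sv: "V' = V" if "(z,V) \<in> R" "(z,V') \<in> R" for z V V' using ok that unfolding okW_def by blast
  have loc: "z \<in> topspace X \<and> openin X V \<and> z \<in> V \<and> V \<subseteq> ?A \<and>
        (\<forall>y V'. y \<in> V \<longrightarrow> (y,V') \<in> R \<longrightarrow> V' \<subseteq> V)" if "(z,V) \<in> R" for z V
    using ok that unfolding okW_def by blast
  have wfR: "wf (relW R)" using ok unfolding okW_def by blast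
  have AX: "?A \<subseteq> topspace X" using loc by blast
  let ?T = "topspace X - ?A"
  have Tsub: "?T \<subseteq> topspace X" by blast
  have Tne: "?T \<noteq> {}" using AX ne by blast
  obtain x V where xV: "x \<in> ?T" "openin X V" "V \<inter> ?T = {x}"
    by (rule scat_iso_open[OF sc Tsub Tne])
  have xA: "x \<notin> ?A" using xV by blast
  define W where "W = V \<union> \<Union>{V'. \<exists>y. y \<in> V \<and> (y,V') \<in> R}"
  define R' where "R' = insert (x,W) R"
  have VA: "V \<subseteq> insert x ?A" using xV openin_subset[OF xV(2)] by blast
  have WA: "W \<subseteq> insert x ?A" unfolding W_def using VA loc by blast
  have oW: "openin X W" unfolding W_def
    by (intro openin_Un xV(2) openin_Union) (use loc in blast)
  have xW: "x \<in> W" unfolding W_def using xV by blast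
  have xtop: "x \<in> topspace X" using xV by blast
  have R'x: "V'' = W" if "(x,V'') \<in> R'" for V'' using that xA unfolding R'_def by blast
  have sv': "V' = V1" if "(z,V1) \<in> R'" "(z,V') \<in> R'" for z V1 V'
  proof (cases "z = x")
    case True then show ?thesis using R'x that by blast
  next
    case False then show ?thesis using sv that unfolding R'_def by blast
  qed
  have DR': "Domain R' = insert x ?A" unfolding R'_def by blast
  have locx: "V'' \<subseteq> W" if hh: "y \<in> W" "(y,V'') \<in> R'" for y V''
  proof (cases "y = x")
    case True then show ?thesis using R'x hh by blast
  next
    case False
    then have yR: "(y,V'') \<in> R" using hh unfolding R'_def by blast
    show ?thesis
    proof (cases "y \<in> V")
      case True then show ?thesis using yR unfolding W_def by blast
    next
      case False
      then obtain y0 V0 where "y0 \<in> V" "(y0,V0) \<in> R" "y \<in> V0" using hh(1) unfolding W_def by blast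
      then have "V'' \<subseteq> V0" using loc yR by blast
      then show ?thesis using \<open>y0 \<in> V\<close> \<open>(y0,V0) \<in> R\<close> unfolding W_def by blast
    qed
  qed
  have loc': "z \<in> topspace X \<and> openin X V1 \<and> z \<in> V1 \<and> V1 \<subseteq> Domain R' \<and>
        (\<forall>y V'. y \<in> V1 \<longrightarrow> (y,V') \<in> R' \<longrightarrow> V' \<subseteq> V1)" if zR: "(z,V1) \<in> R'" for z V1
  proof (cases "z = x")
    case True
    then have "V1 = W" using R'x zR by blast
    show ?thesis unfolding True \<open>V1 = W\<close> DR'
    proof (intro conjI allI impI)
      show "x \<in> topspace X" by fact
      show "openin X W" by fact
      show "x \<in> W" by fact
      show "W \<subseteq> insert x ?A" by fact
      fix y V' assume "y \<in> W" "(y,V') \<in> R'"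
      then show "V' \<subseteq> W" by (rule locx)
    qed
  next
    case False
    then have zR0: "(z,V1) \<in> R" using zR unfolding R'_def by blast
    have inner: "V' \<subseteq> V1" if h: "y \<in> V1" "(y,V') \<in> R'" for y V'
    proof -
      have "y \<in> ?A" using loc[OF zR0] h(1) by blast
      then have "y \<noteq> x" using xA by blast
      then have "(y,V') \<in> R" using h(2) unfolding R'_def by blast
      then show ?thesis using loc[OF zR0] h(1) by blast
    qed
    have L: "z \<in> topspace X" "openin X V1" "z \<in> V1" "V1 \<subseteq> ?A" using loc[OF zR0] by auto
    show ?thesis
    proof (intro conjI allI impI)
      show "z \<in> topspace X" "openin X V1" "z \<in> V1" by (fact L)+
      show "V1 \<subseteq> Domain R'" using L(4) DR' by auto
      fix y V' assume "y \<in> V1" "(y,V') \<in> R'"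
      then show "V' \<subseteq> V1" by (rule inner)
    qed
  qed
  define S where "S = {(y,x)| y. y \<in> W \<and> y \<noteq> x}"
  have relsub: "relW R' \<subseteq> relW R \<union> S"
  proof
    fix p assume "p \<in> relW R'"
    then obtain y z V1 where p: "p = (y,z)" "(z,V1) \<in> R'" "y \<in> V1" "y \<noteq> z"
      unfolding relW_def by blast
    show "p \<in> relW R \<union> S"
    proof (cases "z = x")
      case True then show ?thesis using p R'x unfolding S_def by blast
    next
      case False then have "(z,V1) \<in> R" using p unfolding R'_def by blast
      then show ?thesis using p unfolding relW_def by blast
    qed
  qed
  have wfS: "wf S"
  proof (rule wfI_min)
    fix x0 Q assume "(x0::'a) \<in> Q"
    show "\<exists>z\<in>Q. \<forall>y. (y, z) \<in> S \<longrightarrow> y \<notin> Q"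
    proof (cases "\<exists>q\<in>Q. q \<noteq> x")
      case True
      then obtain q where "q \<in> Q" "q \<noteq> x" by blast
      then show ?thesis unfolding S_def by blast
    next
      case False
      then show ?thesis using \<open>x0 \<in> Q\<close> unfolding S_def by blast
    qed
  qed
  have disj: "Domain (relW R) \<inter> Range S = {}"
  proof -
    have "Domain (relW R) \<subseteq> ?A" unfolding relW_def using loc by blast
    moreover have "Range S \<subseteq> {x}" unfolding S_def by blast
    ultimately show ?thesis using xA by blast
  qed
  have "wf (relW R')" using wf_subset[OF wf_Un[OF wfR wfS disj] relsub] .
  then have "okW X R'" unfolding okW_def
    apply (intro conjI)
    subgoal by (intro allI impI) (erule (1) sv')
    subgoal by (intro allI impI) (erule loc')
    by assumption
  moreover have "R \<subset> R'" unfolding R'_def using xA by blast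
  ultimately show ?thesis by blast
qed

lemma okW_total:
  assumes sc: "scattered_space X"
  shows "\<exists>R. okW X R \<and> Domain R = topspace X"
proof -
  have "\<forall>C\<in>chains {R. okW X R}. \<Union>C \<in> {R. okW X R}" using okW_chain by blast
  then obtain M where M: "M \<in> {R. okW X R}" "\<forall>R\<in>{R. okW X R}. M \<subseteq> R \<longrightarrow> R = M"
    using Zorn_Lemma[of "{R. okW X R}"] by blast
  show ?thesis
  proof (cases "Domain M = topspace X")
    case True then show ?thesis using M by blast
  next
    case False
    then obtain R' where "okW X R'" "M \<subset> R'" using okW_extend[of X M] M sc by blast
    then show ?thesis using M by blast
  qed
qed



lemma qm_topology_eqI:
  assumes qm: "quasi_metric_on (topspace X) d"
    and bo: "\<And>x \<epsilon>. x \<in> topspace X \<Longrightarrow> \<epsilon> > 0 \<Longrightarrow> openin X (qball (topspace X) d x \<epsilon>)"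
    and bs: "\<And>U x. openin X U \<Longrightarrow> x \<in> U \<Longrightarrow> \<exists>\<epsilon>>0. qball (topspace X) d x \<epsilon> \<subseteq> U"
  shows "qm_topology (topspace X) d = X"
  unfolding topology_eq
proof (intro allI iffI)
  fix U assume "openin (qm_topology (topspace X) d) U"
  then have U: "U \<subseteq> topspace X" "\<And>x. x \<in> U \<Longrightarrow> \<exists>e>0. qball (topspace X) d x e \<subseteq> U"
    using qm_open_iff[OF qm] by auto
  show "openin X U"
  proof (subst openin_subopen, intro ballI)
    fix x assume x: "x \<in> U"
    then obtain e where e: "e > 0" "qball (topspace X) d x e \<subseteq> U" using U(2) by blast
    have "x \<in> qball (topspace X) d x e" using qm_refl[OF qm] x U(1) e by (auto simp: qball_def)
    then show "\<exists>T. openin X T \<and> x \<in> T \<and> T \<subseteq> U" using bo[of x e] e x U(1) by auto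
  qed
next
  fix U assume U: "openin X U"
  then show "openin (qm_topology (topspace X) d) U"
    using qm_open_iff[OF qm] openin_subset[OF U] bs[OF U] by auto
qed

lemma scat_quasiPolish:
  assumes sc: "scattered_space X" and sec: "second_countable X"
  shows "quasi_Polish X"
proof -
  let ?S = "topspace X"
  obtain R where okR: "okW X R" and DR: "Domain R = ?S" using okW_total[OF sc] by blast
  define W where "W x = (SOME V. (x,V) \<in> R)" for x
  have xWR: "(x, W x) \<in> R" if "x \<in> ?S" for x
    unfolding W_def using that DR by (metis DomainE someI_ex)
  have locR: "x \<in> topspace X \<and> openin X V \<and> x \<in> V \<and> V \<subseteq> Domain R \<and>
        (\<forall>y V'. y \<in> V \<longrightarrow> (y,V') \<in> R \<longrightarrow> V' \<subseteq> V)" if "(x,V) \<in> R" for x V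
    using okR that unfolding okW_def by blast
  have Wo: "openin X (W x)" and Wx: "x \<in> W x" and WS: "W x \<subseteq> ?S" if "x \<in> ?S" for x
    using locR[OF xWR[OF that]] DR by auto
  have Wtr: "W y \<subseteq> W x" if "x \<in> ?S" "y \<in> W x" for x y
  proof -
    have "y \<in> ?S" using WS that by blast
    then show ?thesis using locR[OF xWR[OF that(1)]] xWR that(2) by blast
  qed
  have wfR: "wf (relW R)" using okR unfolding okW_def by blast
  have inrel: "(y,x) \<in> relW R" if "x \<in> ?S" "y \<in> W x" "y \<noteq> x" for x y
    unfolding relW_def using xWR[OF that(1)] that by blast
  obtain B where B: "countable B" "\<forall>V\<in>B. openin X V"
    "\<forall>U x. openin X U \<and> x \<in> U \<longrightarrow> (\<exists>V\<in>B. x \<in> V \<and> V \<subseteq> U)"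
    using sec unfolding second_countable_def by auto
  define B' where "B' = insert ?S B"
  define b where "b = from_nat_into B'"
  have rb: "range b = B'" unfolding b_def B'_def using B(1) by simp
  have bo: "openin X (b n)" for n
  proof -
    have "b n \<in> B'" using rb by blast
    then show ?thesis unfolding B'_def using B(2) by auto
  qed
  have bS: "b n \<subseteq> ?S" for n using openin_subset[OF bo] .
  have bbase: "\<exists>n. x \<in> b n \<and> b n \<subseteq> U" if hU: "openin X U" "x \<in> U" for U x
  proof -
    obtain V where "V \<in> B" "x \<in> V" "V \<subseteq> U" using B(3) hU by meson
    moreover have "V \<in> range b" using rb \<open>V \<in> B\<close> unfolding B'_def by blast
    ultimately show ?thesis by blast
  qed
  define fw :: "nat \<Rightarrow> real" where "fw n = inverse (real (Suc n))" for n
  have fwpos: "fw n > 0" for n unfolding fw_def by simp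
  have fwmono: "fw m \<le> fw n" if "n \<le> m" for m n
    unfolding fw_def using that by (simp add: le_imp_inverse_le)
  have fwle1: "fw n \<le> 1" for n unfolding fw_def by (simp add: inverse_le_1_iff)
  define d0 where "d0 x y = (if \<exists>n. x \<in> b n \<and> y \<notin> b n then fw (LEAST n. x \<in> b n \<and> y \<notin> b n) else 0)" for x y
  have d0nn: "d0 x y \<ge> 0" for x y unfolding d0_def using fwpos by (auto intro: less_imp_le)
  have d0refl: "d0 x x = 0" for x unfolding d0_def by simp
  have d0ge: "fw n \<le> d0 x y" if "x \<in> b n" "y \<notin> b n" for x y n
  proof -
    have "(LEAST n. x \<in> b n \<and> y \<notin> b n) \<le> n" using that by (intro Least_le) simp
    then show ?thesis unfolding d0_def using that fwmono by auto
  qed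
  have d0small: "d0 x y \<le> fw K" if "\<forall>n<K. x \<in> b n \<longrightarrow> y \<in> b n" for x y K
  proof (cases "\<exists>n. x \<in> b n \<and> y \<notin> b n")
    case True
    let ?l = "LEAST n. x \<in> b n \<and> y \<notin> b n"
    have "x \<in> b ?l \<and> y \<notin> b ?l" using True by (rule LeastI_ex)
    then have "K \<le> ?l" using that by (meson not_le)
    then show ?thesis unfolding d0_def using True fwmono by simp
  next
    case False
    then have "d0 x y = 0" unfolding d0_def by (rule if_not_P)
    then show ?thesis using fwpos[of K] by simp
  qed
  have d0ultra: "d0 x z \<le> max (d0 x y) (d0 y z)" for x y z
  proof (cases "\<exists>n. x \<in> b n \<and> z \<notin> b n")
    case True
    let ?l = "LEAST n. x \<in> b n \<and> z \<notin> b n"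
    have l: "x \<in> b ?l \<and> z \<notin> b ?l" using True by (rule LeastI_ex)
    have eq: "d0 x z = fw ?l" unfolding d0_def using True by simp
    show ?thesis
    proof (cases "y \<in> b ?l")
      case True
      then have "fw ?l \<le> d0 y z" using l d0ge by blast
      then show ?thesis using eq by linarith
    next
      case False
      then have "fw ?l \<le> d0 x y" using l d0ge by blast
      then show ?thesis using eq by linarith
    qed
  next
    case False
    then have "d0 x z = 0" unfolding d0_def by (rule if_not_P)
    then show ?thesis using d0nn[of x y] by simp
  qed
  define e where "e x y = (if y \<in> W x then (0::real) else 1)" for x y
  define d where "d x y = max (d0 x y) (e x y)" for x y
  have enn: "e x y \<ge> 0" for x y unfolding e_def by simp
  have ele1: "e x y \<le> 1" for x y unfolding e_def by simp
  have etri: "e x z \<le> e x y + e y z" if "x \<in> ?S" for x y z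
  proof (cases "z \<in> W x")
    case True then show ?thesis unfolding e_def by simp
  next
    case False
    show ?thesis
    proof (cases "y \<in> W x")
      case True
      then have "z \<notin> W y" using Wtr[OF that True] False by blast
      then show ?thesis unfolding e_def by simp
    next
      case False
      then show ?thesis unfolding e_def by simp
    qed
  qed
  have qm: "quasi_metric_on ?S d"
    unfolding quasi_metric_on_def
  proof (intro conjI ballI)
    fix x y assume "x \<in> ?S" "y \<in> ?S"
    show "0 \<le> d x y" unfolding d_def using d0nn[of x y] by simp
  next
    fix x y assume xy: "x \<in> ?S" "y \<in> ?S"
    show "(x = y) = (d x y = 0 \<and> d y x = 0)"
    proof
      assume "x = y" then show "d x y = 0 \<and> d y x = 0"
        unfolding d_def e_def using d0refl Wx xy by simp
    next
      assume h: "d x y = 0 \<and> d y x = 0"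
      then have "e x y = 0" "e y x = 0" unfolding d_def using d0nn enn
        by (metis max.absorb_iff2 max.cobounded2 order_antisym)+
      then have "y \<in> W x" "x \<in> W y" unfolding e_def by (auto split: if_splits)
      then show "x = y" using inrel xy wf_not_sym[OF wfR] by blast
    qed
  next
    fix x y z assume xyz: "x \<in> ?S" "y \<in> ?S" "z \<in> ?S"
    have "d0 x z \<le> d0 x y + d0 y z" using d0ultra[of x z y] d0nn[of x y] d0nn[of y z] by linarith
    moreover have "e x z \<le> e x y + e y z" using etri xyz by blast
    ultimately show "d x z \<le> d x y + d y z" unfolding d_def by linarith
  qed
  have nbo: "openin X {z \<in> ?S. \<forall>n<K. y \<in> b n \<longrightarrow> z \<in> b n}" for y K
  proof -
    let ?F = "insert ?S ((\<lambda>n. if y \<in> b n then b n else ?S) ` {..<K})"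
    have "\<Inter>?F = {z \<in> ?S. \<forall>n<K. y \<in> b n \<longrightarrow> z \<in> b n}" using bS by auto
    moreover have "openin X (\<Inter>?F)" by (rule openin_Inter) (auto simp: bo)
    ultimately show ?thesis by simp
  qed
  have ballo: "openin X (qball ?S d x \<epsilon>)" if x: "x \<in> ?S" and ep: "\<epsilon> > 0" for x \<epsilon>
  proof (subst openin_subopen, intro ballI)
    fix y assume y: "y \<in> qball ?S d x \<epsilon>"
    then have yS: "y \<in> ?S" and dxy: "d x y < \<epsilon>" by (auto simp: qball_def)
    obtain K where K: "fw K < \<epsilon>"
    proof -
      obtain n where n: "n > 0" "inverse (real n) < \<epsilon>" using ex_inverse_of_nat_less[OF ep] by auto
      have "fw n \<le> inverse (real n)" unfolding fw_def using n(1) by (simp add: le_imp_inverse_le)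
      then have "fw n < \<epsilon>" using n(2) by linarith
      then show ?thesis by (rule that)
    qed
    define T where "T = {z \<in> ?S. \<forall>n<K. y \<in> b n \<longrightarrow> z \<in> b n} \<inter> (if \<epsilon> \<le> 1 then W y else ?S)"
    have "openin X T" unfolding T_def using nbo Wo[OF yS] by auto
    moreover have "y \<in> T" unfolding T_def using yS Wx[OF yS] by auto
    moreover have "T \<subseteq> qball ?S d x \<epsilon>"
    proof
      fix z assume z: "z \<in> T"
      then have zS: "z \<in> ?S" unfolding T_def by auto
      have "d0 y z \<le> fw K" using z unfolding T_def by (intro d0small) auto
      moreover have "d0 x y < \<epsilon>" using dxy unfolding d_def by simp
      ultimately have "d0 x z < \<epsilon>" using d0ultra[of x z y] K by linarith
      moreover have "e x z < \<epsilon>"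
      proof (cases "\<epsilon> \<le> 1")
        case True
        then have zW: "z \<in> W y" using z unfolding T_def by auto
        have "e x y < 1" using dxy True unfolding d_def by simp
        then have "y \<in> W x" unfolding e_def by (auto split: if_splits)
        then have "z \<in> W x" using Wtr[OF x] zW by blast
        then show ?thesis unfolding e_def using ep by simp
      next
        case False then show ?thesis using ele1[of x z] by simp
      qed
      ultimately show "z \<in> qball ?S d x \<epsilon>" using zS unfolding qball_def d_def by simp
    qed
    ultimately show "\<exists>T. openin X T \<and> y \<in> T \<and> T \<subseteq> qball ?S d x \<epsilon>" by blast
  qed
  have ballsub: "\<exists>\<epsilon>>0. qball ?S d x \<epsilon> \<subseteq> U" if U: "openin X U" "x \<in> U" for U x
  proof -
    obtain n where n: "x \<in> b n" "b n \<subseteq> U" using bbase[OF U] by blast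
    have "qball ?S d x (fw n) \<subseteq> b n"
    proof
      fix z assume "z \<in> qball ?S d x (fw n)"
      then have "d0 x z < fw n" unfolding qball_def d_def by simp
      then show "z \<in> b n" using d0ge[OF n(1)] by force
    qed
    then show ?thesis using n fwpos by blast
  qed
  have top: "qm_topology ?S d = X"
    by (rule qm_topology_eqI[OF qm ballo ballsub])
  have compl: "qm_complete ?S d"
    unfolding qm_complete_def
  proof (intro allI impI)
    fix \<sigma> assume C: "qm_Cauchy ?S d \<sigma>"
    then have sS: "\<sigma> n \<in> ?S" for n unfolding qm_Cauchy_def by auto
    obtain N where N: "\<And>n m. N \<le> n \<and> n \<le> m \<Longrightarrow> d (\<sigma> n) (\<sigma> m) < 1/2"
    proof -
      have "\<forall>\<epsilon>>0. \<exists>n0. \<forall>n m. n0 \<le> n \<and> n \<le> m \<longrightarrow> d (\<sigma> n) (\<sigma> m) < \<epsilon>"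
        using C unfolding qm_Cauchy_def by blast
      moreover have "(1/2::real) > 0" by simp
      ultimately obtain n0 where n0: "\<forall>n m. n0 \<le> n \<and> n \<le> m \<longrightarrow> d (\<sigma> n) (\<sigma> m) < 1/2"
        by (meson)
      show ?thesis
        apply (rule that[of n0])
        using n0 by blast
    qed
    have inW: "\<sigma> m \<in> W (\<sigma> n)" if "N \<le> n" "n \<le> m" for n m
    proof -
      have "e (\<sigma> n) (\<sigma> m) < 1/2" using N[of n m] that unfolding d_def by simp
      then show ?thesis unfolding e_def by (auto split: if_splits)
    qed
    let ?Q = "\<sigma> ` {N..}"
    obtain z where z: "z \<in> ?Q" "\<And>y. (y, z) \<in> relW R \<Longrightarrow> y \<notin> ?Q"
      using wfE_min[OF wfR, of "\<sigma> N" ?Q] by blast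
    then obtain k where k: "k \<ge> N" "z = \<sigma> k" by auto
    have const: "\<sigma> m = \<sigma> k" if "m \<ge> k" for m
    proof (rule ccontr)
      assume ne: "\<sigma> m \<noteq> \<sigma> k"
      have "(\<sigma> m, \<sigma> k) \<in> relW R" using inrel[OF sS inW[of k m] ne] k that by simp
      moreover have "\<sigma> m \<in> ?Q" using k that by simp
      ultimately show False using z(2) k by blast
    qed
    have mem: "\<sigma> k \<in> qball ?S (sym_qm d) (\<sigma> k) 1"
      using qm_refl[OF qm sS[of k]] sS[of k] by (simp add: qball_def sym_qm_def)
    have "\<sigma> k \<in> topspace (qm_topology ?S (sym_qm d))"
      unfolding qm_topology_def topology_generated_by_topspace
      apply (rule UnionI[OF _ mem])
      using sS[of k] by (auto intro!: exI[of _ "\<sigma> k"] exI[of _ "1::real"])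
    moreover have "eventually (\<lambda>m. \<sigma> m = \<sigma> k) sequentially"
      unfolding eventually_sequentially using const by blast
    ultimately have "limitin (qm_topology ?S (sym_qm d)) \<sigma> (\<sigma> k) sequentially"
      by (rule limitin_eventually)
    then show "\<exists>y. limitin (qm_topology ?S (sym_qm d)) \<sigma> y sequentially" by blast
  qed
  have "\<exists>dd. quasi_metric_on ?S dd \<and> qm_topology ?S dd = X \<and> qm_complete ?S dd"
    using qm top compl by blast
  then show ?thesis unfolding quasi_Polish_def using sec by simp
qed


theorem theorem65:
  fixes X :: "'a topology"
  assumes "second_countable X"
  shows "scattered_space X \<longleftrightarrow>
           countable (topspace X) \<and> quasi_Polish X \<and> T_D_space X"
proof
  assume sc: "scattered_space X"
  show "countable (topspace X) \<and> quasi_Polish X \<and> T_D_space X"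
    using scat_countable[OF sc assms] scat_quasiPolish[OF sc assms] scat_TD[OF sc] by blast
next
  assume "countable (topspace X) \<and> quasi_Polish X \<and> T_D_space X"
  then show "scattered_space X" using backward by blast
qed

end
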